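(* Let $\lambda,\mu\in P^+$ for $\mathfrak g$ of type $A_2$. Then there exists a bijection $\mathcal S^{A}_{\lambda,\mu}\to\mathcal T^{A}_{\lambda,\mu}$.
   Context: $m_i=\lambda(h_i)$, $n_i=\mu(h_i)$ ($i=1,2$) are non-negative integers. $\mathcal S^{A}_{\lambda,\mu}=\{(a,b,c)\in\mathbb Z_+^3: a\le\min\{m_1,n_1\},\ c\le\min\{m_2,n_2\},\ a+b+c\le\min\{m_1+m_2,n_1+n_2\},\ 2a+b\le m_1+n_1,\ 2c+b\le m_2+n_2\}$. $\mathcal T^{A}_{\lambda,\mu}=\{(a,b,c)\in\mathbb Z_+^3: b\le\min\{m_2,n_1\},\ a+b-c\le n_1,\ b+c-a\le m_2,\ c\le n_2,\ a\le m_1,\ 2a+b-c\le m_1+n_1,\ 2c+b-a\le m_2+n_2\}$. *)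

theory Defs
  imports Main
begin

text \<open>A dominant integral weight of type A2 is determined by the non-negative integers
  m1 = lambda(h1), m2 = lambda(h2). Triples live in Z_+^3, rendered as nat^3.\<close>

definition S_A :: "nat \<Rightarrow> nat \<Rightarrow> nat \<Rightarrow> nat \<Rightarrow> (nat \<times> nat \<times> nat) set" where
  "S_A m1 m2 n1 n2 = {(a, b, c). a \<le> min m1 n1 \<and> c \<le> min m2 n2 \<and>
      a + b + c \<le> min (m1 + m2) (n1 + n2) \<and> 2*a + b \<le> m1 + n1 \<and> 2*c + b \<le> m2 + n2}"

definition T_A :: "nat \<Rightarrow> nat \<Rightarrow> nat \<Rightarrow> nat \<Rightarrow> (nat \<times> nat \<times> nat) set" where
  "T_A m1 m2 n1 n2 = {(a, b, c). b \<le> min m2 n1 \<and>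
      int a + int b - int c \<le> int n1 \<and> int b + int c - int a \<le> int m2 \<and>
      c \<le> n2 \<and> a \<le> m1 \<and>
      2 * int a + int b - int c \<le> int m1 + int n1 \<and>
      2 * int c + int b - int a \<le> int m2 + int n2}"

end

theory Submission imports Defs begin
definition LS :: "int\<Rightarrow>int\<Rightarrow>int\<Rightarrow>int\<Rightarrow>int\<Rightarrow>int\<Rightarrow>int" where
 "LS m1 m2 n1 n2 x y = max 0 (max (x-m1) (max (x-n1) (max (y-m2) (max (y-n2) (max (x+y-m1-m2) (max (x+y-n1-n2) (max (2*x-m1-n1) (2*y-m2-n2))))))))"
definition UT :: "int\<Rightarrow>int\<Rightarrow>int\<Rightarrow>int\<Rightarrow>int\<Rightarrow>int\<Rightarrow>int" where
 "UT m1 m2 n1 n2 x y = min x (min y (min m2 (min n1 (min (n1-x+y) (m2+x-y)))))"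
definition LT :: "int\<Rightarrow>int\<Rightarrow>int\<Rightarrow>int\<Rightarrow>int\<Rightarrow>int\<Rightarrow>int" where
 "LT m1 m2 n1 n2 x y = max 0 (max (y-n2) (x-m1))"

lemma nonempty: assumes "0\<le>m1" "0\<le>m2" "0\<le>n1" "0\<le>n2" "0\<le>x" "0\<le>y"
  shows "(LS m1 m2 n1 n2 x y \<le> min x y) = (LT m1 m2 n1 n2 x y \<le> UT m1 m2 n1 n2 x y \<and> 2*x-y \<le> m1+n1 \<and> 2*y-x \<le> m2+n2)"
  unfolding LS_def UT_def LT_def max.bounded_iff min.bounded_iff
  using assms by (intro iffI; (elim conjE; intro conjI; linarith))

lemma t1: fixes t :: int assumes "0\<le>m1" "0\<le>m2" "0\<le>n1" "0\<le>n2" "0\<le>x" "0\<le>y"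
  and ne: "LS m1 m2 n1 n2 x y \<le> min x y"
  shows "(t \<le> min x y - LS m1 m2 n1 n2 x y) = (t \<le> UT m1 m2 n1 n2 x y - LT m1 m2 n1 n2 x y)" 
  using ne assms unfolding LS_def UT_def LT_def le_diff_eq max_add_distrib_right max.bounded_iff min.bounded_iff
  by (intro iffI; (elim conjE; intro conjI; linarith))

lemma len: assumes "0\<le>m1" "0\<le>m2" "0\<le>n1" "0\<le>n2" "0\<le>x" "0\<le>y"
  and ne: "LS m1 m2 n1 n2 x y \<le> min x y"
  shows "min x y - LS m1 m2 n1 n2 x y = UT m1 m2 n1 n2 x y - LT m1 m2 n1 n2 x y"
  using t1[OF assms, of "min x y - LS m1 m2 n1 n2 x y"] t1[OF assms, of "UT m1 m2 n1 n2 x y - LT m1 m2 n1 n2 x y"] by linarith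

lemma memS: "((a,b,c) \<in> S_A m1 m2 n1 n2) = (LS (int m1) (int m2) (int n1) (int n2) (int a + int b) (int b + int c) \<le> int b)"
  unfolding S_A_def LS_def max.bounded_iff min.bounded_iff
  by simp (intro iffI; (elim conjE; intro conjI; linarith))

lemma memT: "((a,b,c) \<in> T_A m1 m2 n1 n2) = (LT (int m1) (int m2) (int n1) (int n2) (int a + int b) (int b + int c) \<le> int b
   \<and> int b \<le> UT (int m1) (int m2) (int n1) (int n2) (int a + int b) (int b + int c)
   \<and> 2*(int a + int b) - (int b + int c) \<le> int m1 + int n1 \<and> 2*(int b + int c) - (int a + int b) \<le> int m2 + int n2)"
  unfolding T_A_def LT_def UT_def max.bounded_iff min.bounded_iff
  by simp (intro iffI; (elim conjE; intro conjI; linarith))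

definition fmap :: "int\<Rightarrow>int\<Rightarrow>int\<Rightarrow>int\<Rightarrow>(nat\<times>nat\<times>nat) \<Rightarrow> (nat\<times>nat\<times>nat)" where
  "fmap M1 M2 N1 N2 p = (case p of (a,b,c) \<Rightarrow>
     (let x = int a + int b; y = int b + int c;
          b' = int b - LS M1 M2 N1 N2 x y + LT M1 M2 N1 N2 x y
      in (nat (x - b'), nat b', nat (y - b'))))"

definition gmap :: "int\<Rightarrow>int\<Rightarrow>int\<Rightarrow>int\<Rightarrow>(nat\<times>nat\<times>nat) \<Rightarrow> (nat\<times>nat\<times>nat)" where
  "gmap M1 M2 N1 N2 p = (case p of (a,b,c) \<Rightarrow>
     (let x = int a + int b; y = int b + int c;
          b' = int b - LT M1 M2 N1 N2 x y + LS M1 M2 N1 N2 x y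
      in (nat (x - b'), nat b', nat (y - b'))))"

theorem lemma4p2:
  fixes m1 m2 n1 n2 :: nat
  shows "\<exists>f. bij_betw f (S_A m1 m2 n1 n2) (T_A m1 m2 n1 n2)"
proof -
  let ?M1 = "int m1" and ?M2 = "int m2" and ?N1 = "int n1" and ?N2 = "int n2"
  let ?f = "fmap ?M1 ?M2 ?N1 ?N2" and ?g = "gmap ?M1 ?M2 ?N1 ?N2"
  have fS: "?f p \<in> T_A m1 m2 n1 n2 \<and> ?g (?f p) = p" if "p \<in> S_A m1 m2 n1 n2" for p
  proof -
    obtain a b c where p: "p = (a,b,c)" by (cases p) auto
    define x where "x = int a + int b"
    define y where "y = int b + int c"
    have m: "LS ?M1 ?M2 ?N1 ?N2 x y \<le> int b" using that p memS x_def y_def by simp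
    have xy: "0 \<le> x" "0 \<le> y" "int b \<le> min x y" using x_def y_def by auto
    have ne: "LS ?M1 ?M2 ?N1 ?N2 x y \<le> min x y" using m xy by linarith
    note n = nonempty[of ?M1 ?M2 ?N1 ?N2 x y, OF _ _ _ _ xy(1,2)]
    note l = len[of ?M1 ?M2 ?N1 ?N2 x y, OF _ _ _ _ xy(1,2) ne]
    have lt0: "0 \<le> LT ?M1 ?M2 ?N1 ?N2 x y" unfolding LT_def by simp
    have ut: "UT ?M1 ?M2 ?N1 ?N2 x y \<le> min x y" unfolding UT_def by simp
    define b' where "b' = int b - LS ?M1 ?M2 ?N1 ?N2 x y + LT ?M1 ?M2 ?N1 ?N2 x y"
    have fp: "?f p = (nat (x - b'), nat b', nat (y - b'))"
      unfolding fmap_def p b'_def x_def y_def Let_def by simp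
    have b'b: "LT ?M1 ?M2 ?N1 ?N2 x y \<le> b'" "b' \<le> UT ?M1 ?M2 ?N1 ?N2 x y"
      using m ne n l xy ut unfolding b'_def by auto
    have e1: "int (nat (x - b')) + int (nat b') = x" "int (nat b') + int (nat (y - b')) = y"
      using b'b lt0 ut by auto
    have "?f p \<in> T_A m1 m2 n1 n2"
      unfolding fp memT e1 using b'b lt0 n ne by auto
    moreover have "?g (?f p) = p"
    proof -
      have eqb: "int (nat b') - LT ?M1 ?M2 ?N1 ?N2 x y + LS ?M1 ?M2 ?N1 ?N2 x y = int b"
        using b'b lt0 unfolding b'_def by simp
      have "?g (nat (x - b'), nat b', nat (y - b')) = (nat (x - int b), nat (int b), nat (y - int b))"
        unfolding gmap_def Let_def prod.case e1 eqb by (rule refl)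
      also have "\<dots> = (a,b,c)" using x_def y_def by simp
      finally have "?g (nat (x - b'), nat b', nat (y - b')) = (a,b,c)" .
      then show ?thesis using fp p by simp
    qed
    ultimately show ?thesis by blast
  qed
  have gT: "?g p \<in> S_A m1 m2 n1 n2 \<and> ?f (?g p) = p" if "p \<in> T_A m1 m2 n1 n2" for p
  proof -
    obtain a b c where p: "p = (a,b,c)" by (cases p) auto
    define x where "x = int a + int b"
    define y where "y = int b + int c"
    have m: "LT ?M1 ?M2 ?N1 ?N2 x y \<le> int b" "int b \<le> UT ?M1 ?M2 ?N1 ?N2 x y"
      "2*x - y \<le> ?M1 + ?N1" "2*y - x \<le> ?M2 + ?N2"
      using that p memT x_def y_def by simp_all
    have xy: "0 \<le> x" "0 \<le> y" using x_def y_def by auto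
    note n = nonempty[of ?M1 ?M2 ?N1 ?N2 x y, OF _ _ _ _ xy(1,2)]
    have ne: "LS ?M1 ?M2 ?N1 ?N2 x y \<le> min x y" using m n by linarith
    note l = len[of ?M1 ?M2 ?N1 ?N2 x y, OF _ _ _ _ xy(1,2) ne]
    have ls0: "0 \<le> LS ?M1 ?M2 ?N1 ?N2 x y" unfolding LS_def by (rule max.cobounded1)
    have lt0: "0 \<le> LT ?M1 ?M2 ?N1 ?N2 x y" unfolding LT_def by simp
    have ut: "UT ?M1 ?M2 ?N1 ?N2 x y \<le> min x y" unfolding UT_def by simp
    define b' where "b' = int b - LT ?M1 ?M2 ?N1 ?N2 x y + LS ?M1 ?M2 ?N1 ?N2 x y"
    have gp: "?g p = (nat (x - b'), nat b', nat (y - b'))"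
      unfolding gmap_def p b'_def x_def y_def Let_def by simp
    have b'b: "LS ?M1 ?M2 ?N1 ?N2 x y \<le> b'" "b' \<le> min x y"
      using m ne l xy ut unfolding b'_def by auto
    have e1: "int (nat (x - b')) + int (nat b') = x" "int (nat b') + int (nat (y - b')) = y"
      using b'b ls0 by auto
    have "?g p \<in> S_A m1 m2 n1 n2"
      unfolding gp memS e1 using b'b ls0 by auto
    moreover have "?f (?g p) = p"
    proof -
      have eqb: "int (nat b') - LS ?M1 ?M2 ?N1 ?N2 x y + LT ?M1 ?M2 ?N1 ?N2 x y = int b"
        using b'b ls0 unfolding b'_def by simp
      have "?f (nat (x - b'), nat b', nat (y - b')) = (nat (x - int b), nat (int b), nat (y - int b))"
        unfolding fmap_def Let_def prod.case e1 eqb by (rule refl)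
      also have "\<dots> = (a,b,c)" using x_def y_def by simp
      finally have "?f (nat (x - b'), nat b', nat (y - b')) = (a,b,c)" .
      then show ?thesis using gp p by simp
    qed
    ultimately show ?thesis by blast
  qed
  have "bij_betw ?f (S_A m1 m2 n1 n2) (T_A m1 m2 n1 n2)"
    by (rule bij_betw_byWitness[where f'="?g"]) (use fS gT in auto)
  then show ?thesis by blast
qed

end
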